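(* Let $(B,\mathfrak{m})$ be a deformation base, $X$ a vector space and $Y\subseteq B\widehat{\otimes}X$ a pseudoclosed $B$-submodule. Then $BY=B\cdot Y$ and $\mathfrak{m}^kY=\mathfrak{m}^k\cdot Y$ for every $k$.
   Context: Deformation base: complete local Noetherian unital $\mathbb{C}$-algebra $B$ with maximal ideal $\mathfrak{m}$, $B/\mathfrak{m}=\mathbb{C}$; $B\widehat{\otimes}X=\varprojlim(B/\mathfrak{m}^k\otimes X)$. For a subspace $Y\subseteq B\widehat{\otimes}X$: $BY=\{\sum_{i\ge0}b_iy_i:y_i\in Y,b_i\in\mathfrak{m}^{k_i},k_i\to\infty\}$ (convergent series), $\mathfrak{m}^kY$ is the same set with all $k_i\ge k$, while $B\cdot Y$ and $\mathfrak{m}^k\cdot Y$ denote the finite spans of products $by$ with $b\in B$ (resp. $b\in\mathfrak{m}^k$) and $y\in Y$. $Y$ is pseudoclosed if $BY\subseteq Y$. *)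

theory Defs
  imports Complex_Main
begin

definition is_ideal :: "'b::comm_ring_1 set \<Rightarrow> bool" where
  "is_ideal I \<longleftrightarrow> 0 \<in> I \<and> (\<forall>x\<in>I. \<forall>y\<in>I. x + y \<in> I) \<and> (\<forall>a. \<forall>x\<in>I. a * x \<in> I)"

definition ideal_gen :: "'b::comm_ring_1 set \<Rightarrow> 'b set" where
  "ideal_gen F = {\<Sum>f\<in>G. c f * f | G c. finite G \<and> G \<subseteq> F}"

definition ideal_pow :: "'b::comm_ring_1 set \<Rightarrow> nat \<Rightarrow> 'b set" where
  "ideal_pow m k = ideal_gen {prod_list xs | xs. length xs = k \<and> set xs \<subseteq> m}"

definition is_maximal_ideal :: "'b::comm_ring_1 set \<Rightarrow> bool" where
  "is_maximal_ideal I \<longleftrightarrow> is_ideal I \<and> I \<noteq> UNIV \<and>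
     (\<forall>J. is_ideal J \<and> I \<subseteq> J \<longrightarrow> J = I \<or> J = UNIV)"

definition noetherian_ring :: "'b::comm_ring_1 itself \<Rightarrow> bool" where
  "noetherian_ring _ \<longleftrightarrow> (\<forall>I::'b set. is_ideal I \<longrightarrow> (\<exists>F. finite F \<and> I = ideal_gen F))"

definition madic_lim :: "'b::comm_ring_1 set \<Rightarrow> (nat \<Rightarrow> 'b) \<Rightarrow> 'b \<Rightarrow> bool" where
  "madic_lim m u l \<longleftrightarrow> (\<forall>k. \<exists>N. \<forall>n\<ge>N. l - u n \<in> ideal_pow m k)"

text \<open>B is m-adically complete and separated, i.e. B = lim B/m^k.\<close>
definition madic_complete :: "'b::comm_ring_1 set \<Rightarrow> bool" where
  "madic_complete m \<longleftrightarrow>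
     (\<Inter>k. ideal_pow m k) = {0} \<and>
     (\<forall>u. (\<forall>k. \<exists>N. \<forall>n\<ge>N. \<forall>n'\<ge>N. u n - u n' \<in> ideal_pow m k) \<longrightarrow> (\<exists>l. madic_lim m u l))"

text \<open>Deformation base: complete local Noetherian unital commutative C-algebra (B,m),
  with C-algebra structure given by the ring homomorphism iota, and B/m = C.\<close>
definition deformation_base :: "(complex \<Rightarrow> 'b::comm_ring_1) \<Rightarrow> 'b set \<Rightarrow> bool" where
  "deformation_base \<iota> m \<longleftrightarrow>
     (\<forall>a b. \<iota> (a + b) = \<iota> a + \<iota> b) \<and> (\<forall>a b. \<iota> (a * b) = \<iota> a * \<iota> b) \<and> \<iota> 1 = 1 \<and>
     is_maximal_ideal m \<and> (\<forall>I. is_maximal_ideal I \<longrightarrow> I = m) \<and>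
     noetherian_ring TYPE('b) \<and>
     (\<forall>b. \<exists>!c. b - \<iota> c \<in> m) \<and>
     madic_complete m"

text \<open>B/m^k \<otimes> X = finitely supported functions S \<rightarrow> B/m^k; the inverse limit consists of
  functions f : S \<rightarrow> B such that f mod m^k is finitely supported for every k.\<close>
definition ctensor :: "'b::comm_ring_1 set \<Rightarrow> 's set \<Rightarrow> ('s \<Rightarrow> 'b) set" where
  "ctensor m S = {f. (\<forall>s. s \<notin> S \<longrightarrow> f s = 0) \<and> (\<forall>k. finite {s\<in>S. f s \<notin> ideal_pow m k})}"

definition is_submodule :: "'b::comm_ring_1 set \<Rightarrow> 's set \<Rightarrow> ('s \<Rightarrow> 'b) set \<Rightarrow> bool" where
  "is_submodule m S Y \<longleftrightarrow> Y \<subseteq> ctensor m S \<and> (\<lambda>s. 0) \<in> Y \<and>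
     (\<forall>y\<in>Y. \<forall>z\<in>Y. (\<lambda>s. y s + z s) \<in> Y) \<and> (\<forall>b. \<forall>y\<in>Y. (\<lambda>s. b * y s) \<in> Y)"

definition series_sum :: "'b::comm_ring_1 set \<Rightarrow> (nat \<Rightarrow> 'b) \<Rightarrow> (nat \<Rightarrow> 's \<Rightarrow> 'b) \<Rightarrow> ('s \<Rightarrow> 'b) \<Rightarrow> bool" where
  "series_sum m b y z \<longleftrightarrow>
     (\<forall>k. \<exists>N. \<forall>n\<ge>N. \<forall>s. z s - (\<Sum>i<n. b i * y i s) \<in> ideal_pow m k)"

text \<open>m^k Y (convergent series, k_i \<ge> k, k_i \<rightarrow> \<infinity>); BY = m^0 Y.\<close>
definition pseries :: "'b::comm_ring_1 set \<Rightarrow> 's set \<Rightarrow> nat \<Rightarrow> ('s \<Rightarrow> 'b) set \<Rightarrow> ('s \<Rightarrow> 'b) set" where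
  "pseries m S k Y = {z \<in> ctensor m S. \<exists>b y kk. (\<forall>i. y i \<in> Y) \<and> (\<forall>i. kk i \<ge> k) \<and>
      (\<forall>i. b i \<in> ideal_pow m (kk i)) \<and> filterlim kk at_top sequentially \<and> series_sum m b y z}"

abbreviation pseriesB :: "'b::comm_ring_1 set \<Rightarrow> 's set \<Rightarrow> ('s \<Rightarrow> 'b) set \<Rightarrow> ('s \<Rightarrow> 'b) set" where
  "pseriesB m S Y \<equiv> pseries m S 0 Y"

text \<open>C \<cdot> Y: finite spans of products c y, c \<in> C, y \<in> Y.\<close>
definition fspan :: "'b::comm_ring_1 set \<Rightarrow> ('s \<Rightarrow> 'b) set \<Rightarrow> ('s \<Rightarrow> 'b) set" where
  "fspan C Y = {(\<lambda>s. \<Sum>i<n. c i * y i s) | (n::nat) c y. \<forall>i<n. c i \<in> C \<and> y i \<in> Y}"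

definition pseudoclosed :: "'b::comm_ring_1 set \<Rightarrow> 's set \<Rightarrow> ('s \<Rightarrow> 'b) set \<Rightarrow> bool" where
  "pseudoclosed m S Y \<longleftrightarrow> pseriesB m S Y \<subseteq> Y"

end

theory Submission
  imports Defs
begin

lemma is_ideal_sum:
  assumes "is_ideal I" "finite G" "\<And>f. f \<in> G \<Longrightarrow> g f \<in> I"
  shows "sum g G \<in> I"
  using assms(2,3)
proof (induction G rule: finite_induct)
  case empty then show ?case using assms(1) by (simp add: is_ideal_def)
next
  case (insert x F) then show ?case using assms(1) by (simp add: is_ideal_def)
qed

lemma is_ideal_mult: "is_ideal I \<Longrightarrow> x \<in> I \<Longrightarrow> a * x \<in> I"
  by (simp add: is_ideal_def)
lemma is_ideal_mult2: "is_ideal I \<Longrightarrow> x \<in> I \<Longrightarrow> x * a \<in> I"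
  by (simp add: is_ideal_def mult.commute)
lemma is_ideal_add: "is_ideal I \<Longrightarrow> x \<in> I \<Longrightarrow> y \<in> I \<Longrightarrow> x + y \<in> I"
  by (simp add: is_ideal_def)
lemma is_ideal_0: "is_ideal I \<Longrightarrow> 0 \<in> I"
  by (simp add: is_ideal_def)
lemma is_ideal_uminus: "is_ideal I \<Longrightarrow> x \<in> I \<Longrightarrow> - x \<in> I"
  using is_ideal_mult[of I x "-1"] by simp
lemma is_ideal_diff: "is_ideal I \<Longrightarrow> x \<in> I \<Longrightarrow> y \<in> I \<Longrightarrow> x - y \<in> I"
  using is_ideal_add[of I x "-y"] is_ideal_uminus[of I y] by simp

lemma restrict_sum:
  assumes "finite H" "G \<subseteq> H"
  shows "(\<Sum>f\<in>H. (if f \<in> G then c f else 0) * f) = (\<Sum>f\<in>G. c f * (f::'a::comm_ring_1))"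
proof -
  have "(\<Sum>f\<in>H. (if f \<in> G then c f else 0) * f) = (\<Sum>f\<in>H. if f \<in> G then c f * f else 0)"
    by (rule sum.cong) auto
  also have "\<dots> = (\<Sum>f\<in>H \<inter> G. c f * f)" using assms(1) by (simp add: sum.inter_restrict)
  also have "H \<inter> G = G" using assms(2) by auto
  finally show ?thesis .
qed

lemma ideal_gen_ideal: "is_ideal (ideal_gen F)"
  unfolding is_ideal_def
proof (intro conjI ballI allI)
  show "0 \<in> ideal_gen F" unfolding ideal_gen_def
    by (rule CollectI, rule exI[of _ "{}"]) auto
next
  fix x y assume "x \<in> ideal_gen F" "y \<in> ideal_gen F"
  then obtain G1 c1 G2 c2 where g: "finite G1" "G1 \<subseteq> F" "x = (\<Sum>f\<in>G1. c1 f * f)"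
    "finite G2" "G2 \<subseteq> F" "y = (\<Sum>f\<in>G2. c2 f * f)"
    unfolding ideal_gen_def by blast
  let ?c = "\<lambda>f. (if f \<in> G1 then c1 f else 0) + (if f \<in> G2 then c2 f else 0)"
  have "x + y = (\<Sum>f\<in>G1 \<union> G2. ?c f * f)"
    using g restrict_sum[of "G1 \<union> G2" G1 c1] restrict_sum[of "G1 \<union> G2" G2 c2]
    by (simp add: distrib_right sum.distrib)
  moreover have "finite (G1 \<union> G2)" "G1 \<union> G2 \<subseteq> F" using g by auto
  ultimately show "x + y \<in> ideal_gen F" unfolding ideal_gen_def
    by (intro CollectI exI[of _ "G1 \<union> G2"] exI[of _ ?c]) simp
next
  fix a x assume "x \<in> ideal_gen F"
  then obtain G c where g: "finite G" "G \<subseteq> F" "x = (\<Sum>f\<in>G. c f * f)"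
    unfolding ideal_gen_def by blast
  have "a * x = (\<Sum>f\<in>G. (a * c f) * f)" using g by (simp add: sum_distrib_left mult.assoc)
  then show "a * x \<in> ideal_gen F" unfolding ideal_gen_def using g
    by (intro CollectI exI[of _ G] exI[of _ "\<lambda>f. a * c f"]) simp
qed

lemma ideal_gen_sub: "F \<subseteq> ideal_gen F"
proof
  fix x assume "x \<in> F"
  then show "x \<in> ideal_gen F" unfolding ideal_gen_def
    by (intro CollectI exI[of _ "{x}"] exI[of _ "\<lambda>f. 1"]) simp
qed

lemma ideal_gen_least:
  assumes I: "is_ideal I" and F: "F \<subseteq> I" shows "ideal_gen F \<subseteq> I"
proof
  fix x assume "x \<in> ideal_gen F"
  then obtain G c where g: "finite G" "G \<subseteq> F" "x = (\<Sum>f\<in>G. c f * f)"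
    unfolding ideal_gen_def by blast
  have "(\<Sum>f\<in>G. c f * f) \<in> I"
  proof (rule is_ideal_sum[OF I g(1)])
    fix f assume "f \<in> G" then show "c f * f \<in> I" using F g(2) is_ideal_mult[OF I] by blast
  qed
  then show "x \<in> I" using g(3) by simp
qed

lemma ideal_pow_ideal: "is_ideal (ideal_pow m k)"
  unfolding ideal_pow_def by (rule ideal_gen_ideal)

lemma ideal_pow_gen: "length xs = k \<Longrightarrow> set xs \<subseteq> m \<Longrightarrow> prod_list xs \<in> ideal_pow m k"
proof -
  assume a: "length xs = k" "set xs \<subseteq> m"
  have "prod_list xs \<in> {prod_list xs | xs. length xs = k \<and> set xs \<subseteq> m}"
    using a by (intro CollectI exI[of _ xs]) simp
  then show ?thesis unfolding ideal_pow_def by (rule subsetD[OF ideal_gen_sub])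
qed

lemma ideal_pow_0: "ideal_pow m 0 = UNIV"
proof -
  have "1 \<in> ideal_pow m 0" using ideal_pow_gen[of "[]" 0 m] by simp
  have "x \<in> ideal_pow m 0" for x
    using is_ideal_mult[OF ideal_pow_ideal \<open>1 \<in> ideal_pow m 0\<close>, of x] by simp
  then show ?thesis by blast
qed

lemma ideal_pow_Suc: "ideal_pow m (Suc k) \<subseteq> ideal_pow m k"
proof -
  have "{prod_list xs | xs. length xs = Suc k \<and> set xs \<subseteq> m} \<subseteq> ideal_pow m k"
  proof clarify
    fix xs :: "'a list" assume xs: "length xs = Suc k" "set xs \<subseteq> m"
    obtain x ys where "xs = x # ys" using xs(1) by (cases xs) auto
    with xs have "length ys = k" "set ys \<subseteq> m" by auto
    then have "prod_list ys \<in> ideal_pow m k" by (rule ideal_pow_gen)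
    from is_ideal_mult[OF ideal_pow_ideal this, of x] \<open>xs = x # ys\<close>
    show "prod_list xs \<in> ideal_pow m k" by simp
  qed
  then show ?thesis unfolding ideal_pow_def[of m "Suc k"]
    by (rule ideal_gen_least[OF ideal_pow_ideal])
qed

lemma ideal_pow_mono: "k \<le> j \<Longrightarrow> ideal_pow m j \<subseteq> ideal_pow m k"
proof (induction j rule: dec_induct)
  case base then show ?case by simp
next
  case (step n) then show ?case using ideal_pow_Suc by blast
qed

lemma ideal_pow_split:
  assumes F: "finite F" "ideal_pow m k = ideal_gen F" and b: "b \<in> ideal_pow m (k + j)"
  shows "\<exists>c. (\<forall>f. c f \<in> ideal_pow m j) \<and> b = (\<Sum>f\<in>F. f * c f)"
proof -
  define D where "D = {b. \<exists>c. (\<forall>f. c f \<in> ideal_pow m j) \<and> b = (\<Sum>f\<in>F. f * c f)}"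
  have J: "is_ideal (ideal_pow m j)" by (rule ideal_pow_ideal)
  have D: "is_ideal D" unfolding is_ideal_def
  proof (intro conjI ballI allI)
    show "0 \<in> D" unfolding D_def using is_ideal_0[OF J] by (intro CollectI exI[of _ "\<lambda>f. 0"]) simp
  next
    fix x y assume "x \<in> D" "y \<in> D"
    then obtain c1 c2 where "\<forall>f. c1 f \<in> ideal_pow m j" "x = (\<Sum>f\<in>F. f * c1 f)"
      "\<forall>f. c2 f \<in> ideal_pow m j" "y = (\<Sum>f\<in>F. f * c2 f)" unfolding D_def by blast
    then show "x + y \<in> D" unfolding D_def using is_ideal_add[OF J]
      by (intro CollectI exI[of _ "\<lambda>f. c1 f + c2 f"]) (simp add: distrib_left sum.distrib)
  next
    fix a x assume "x \<in> D"
    then obtain c1 where "\<forall>f. c1 f \<in> ideal_pow m j" "x = (\<Sum>f\<in>F. f * c1 f)"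
      unfolding D_def by blast
    moreover have "\<forall>f. a * c1 f \<in> ideal_pow m j" using calculation(1) is_ideal_mult[OF J] by blast
    ultimately show "a * x \<in> D" unfolding D_def
      by (intro CollectI exI[of _ "\<lambda>f. a * c1 f"]) (simp add: sum_distrib_left algebra_simps)
  qed
  have "{prod_list xs | xs. length xs = k + j \<and> set xs \<subseteq> m} \<subseteq> D"
  proof clarify
    fix xs :: "'a list" assume xs: "length xs = k + j" "set xs \<subseteq> m"
    have p: "prod_list xs = prod_list (take k xs) * prod_list (drop k xs)"
      by (metis append_take_drop_id prod_list.append)
    have "prod_list (take k xs) \<in> ideal_pow m k"
      using xs by (intro ideal_pow_gen) (auto dest: in_set_takeD)
    then obtain G a where g: "finite G" "G \<subseteq> F" "prod_list (take k xs) = (\<Sum>f\<in>G. a f * f)"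
      using F(2) unfolding ideal_gen_def by blast
    have q: "prod_list (drop k xs) \<in> ideal_pow m j"
      using xs by (intro ideal_pow_gen) (auto dest: in_set_dropD)
    let ?c = "\<lambda>f. (if f \<in> G then a f else 0) * prod_list (drop k xs)"
    have "prod_list xs = (\<Sum>f\<in>F. f * ?c f)"
      unfolding p g(3) restrict_sum[OF F(1) g(2), symmetric]
      by (simp add: sum_distrib_right sum_distrib_left algebra_simps)
    moreover have "\<forall>f. ?c f \<in> ideal_pow m j" using is_ideal_mult[OF J q] by simp
    ultimately show "prod_list xs \<in> D" unfolding D_def by (intro CollectI exI[of _ ?c]) simp
  qed
  then have "ideal_pow m (k + j) \<subseteq> D" unfolding ideal_pow_def[of m "k+j"]
    by (rule ideal_gen_least[OF D])
  then show ?thesis using b unfolding D_def by blast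
qed


lemma series_exists:
  assumes mc: "madic_complete m"
    and y: "\<And>i. y i \<in> ctensor m S"
    and cc: "\<And>i. cc i \<in> ideal_pow m (jj i)"
    and jj: "filterlim jj at_top sequentially"
  shows "\<exists>w. w \<in> ctensor m S \<and> series_sum m cc y w"
proof -
  define P where "P n s = (\<Sum>i<n. cc i * y i s)" for n s
  have tail: "\<exists>N. \<forall>n\<ge>N. \<forall>n'\<ge>N. \<forall>s. P n s - P n' s \<in> ideal_pow m K" for K
  proof -
    have "eventually (\<lambda>i. jj i \<ge> K) sequentially" using jj by (simp add: filterlim_at_top)
    then obtain N where N: "\<And>i. i \<ge> N \<Longrightarrow> jj i \<ge> K" by (auto simp: eventually_sequentially)
    have a: "P n s - P N s \<in> ideal_pow m K" if "n \<ge> N" for n s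
      using that
    proof (induction n rule: dec_induct)
      case base then show ?case using is_ideal_0[OF ideal_pow_ideal] by simp
    next
      case (step n)
      have "cc n \<in> ideal_pow m K" using cc[of n] ideal_pow_mono[OF N[OF step(1)]] by blast
      then have "cc n * y n s \<in> ideal_pow m K" by (rule is_ideal_mult2[OF ideal_pow_ideal])
      moreover have "P (Suc n) s - P N s = (P n s - P N s) + cc n * y n s"
        by (simp add: P_def)
      ultimately show ?case using step(3) is_ideal_add[OF ideal_pow_ideal] by (metis)
    qed
    show ?thesis
    proof (intro exI allI impI)
      fix n n' s assume "n \<ge> N" "n' \<ge> N"
      then have "(P n s - P N s) - (P n' s - P N s) \<in> ideal_pow m K"
        by (intro is_ideal_diff[OF ideal_pow_ideal] a)
      then show "P n s - P n' s \<in> ideal_pow m K" by simp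
    qed
  qed
  have lim: "\<exists>l. madic_lim m (\<lambda>n. P n s) l" for s
  proof -
    have C: "\<forall>u. (\<forall>k. \<exists>N. \<forall>n\<ge>N. \<forall>n'\<ge>N. u n - u n' \<in> ideal_pow m k) \<longrightarrow> (\<exists>l. madic_lim m u l)"
      using mc unfolding madic_complete_def by (rule conjunct2)
    have "\<forall>k. \<exists>N. \<forall>n\<ge>N. \<forall>n'\<ge>N. P n s - P n' s \<in> ideal_pow m k"
    proof
      fix k
      from tail[of k] obtain N where "\<forall>n\<ge>N. \<forall>n'\<ge>N. \<forall>s. P n s - P n' s \<in> ideal_pow m k" ..
      then show "\<exists>N. \<forall>n\<ge>N. \<forall>n'\<ge>N. P n s - P n' s \<in> ideal_pow m k" by (intro exI[of _ N]) simp
    qed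
    then show ?thesis using spec[OF C, of "\<lambda>n. P n s"] by simp
  qed
  define w where "w s = (if s \<in> S then (SOME l. madic_lim m (\<lambda>n. P n s) l) else 0)" for s
  have yS: "s \<notin> S \<Longrightarrow> y i s = 0" for s i using y[of i] unfolding ctensor_def by simp
  have ser: "series_sum m cc y w"
    unfolding series_sum_def
  proof
    fix K
    obtain N where N: "\<forall>n\<ge>N. \<forall>n'\<ge>N. \<forall>s. P n s - P n' s \<in> ideal_pow m K" using tail[of K] ..
    show "\<exists>N. \<forall>n\<ge>N. \<forall>s. w s - (\<Sum>i<n. cc i * y i s) \<in> ideal_pow m K"
    proof (intro exI allI impI)
      fix n s assume n: "n \<ge> N"
      show "w s - (\<Sum>i<n. cc i * y i s) \<in> ideal_pow m K"
      proof (cases "s \<in> S")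
        case False
        then show ?thesis using yS is_ideal_0[OF ideal_pow_ideal] by (simp add: w_def)
      next
        case True
        have "madic_lim m (\<lambda>n. P n s) (w s)"
          using True someI_ex[OF lim[of s]] by (simp add: w_def)
        then obtain Ns where Ns: "\<forall>n\<ge>Ns. w s - P n s \<in> ideal_pow m K"
          unfolding madic_lim_def by blast
        have h1: "w s - P (max N Ns) s \<in> ideal_pow m K" using Ns by simp
        have h2: "P (max N Ns) s - P n s \<in> ideal_pow m K" using N n by simp
        have "(w s - P (max N Ns) s) + (P (max N Ns) s - P n s) \<in> ideal_pow m K"
          by (rule is_ideal_add[OF ideal_pow_ideal h1 h2])
        then show ?thesis by (simp add: P_def)
      qed
    qed
  qed
  have "w \<in> ctensor m S"
    unfolding ctensor_def
  proof (intro CollectI conjI allI impI)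
    fix s assume "s \<notin> S" then show "w s = 0" by (simp add: w_def)
  next
    fix K
    obtain N where N: "\<forall>s. w s - P N s \<in> ideal_pow m K"
      using ser unfolding series_sum_def P_def by blast
    have "{s \<in> S. w s \<notin> ideal_pow m K} \<subseteq> (\<Union>i<N. {s \<in> S. y i s \<notin> ideal_pow m K})"
    proof (rule subsetI, rule ccontr)
      fix s assume s: "s \<in> {s \<in> S. w s \<notin> ideal_pow m K}"
        "s \<notin> (\<Union>i<N. {s \<in> S. y i s \<notin> ideal_pow m K})"
      then have "\<forall>i<N. y i s \<in> ideal_pow m K" by auto
      then have "P N s \<in> ideal_pow m K" unfolding P_def
        by (intro is_ideal_sum[OF ideal_pow_ideal]) (auto intro: is_ideal_mult[OF ideal_pow_ideal])
      then have "(w s - P N s) + P N s \<in> ideal_pow m K"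
        using N is_ideal_add[OF ideal_pow_ideal] by blast
      then show False using s by simp
    qed
    moreover have "finite (\<Union>i<N. {s \<in> S. y i s \<notin> ideal_pow m K})"
      using y unfolding ctensor_def by auto
    ultimately show "finite {s \<in> S. w s \<notin> ideal_pow m K}" by (rule finite_subset)
  qed
  then show ?thesis using ser by blast
qed


lemma fspan_sub:
  assumes "is_submodule m S Y"
  shows "fspan C Y \<subseteq> Y"
proof
  fix z assume "z \<in> fspan C Y"
  then obtain n :: nat and c y where z: "z = (\<lambda>s. \<Sum>i<n. c i * y i s)" "\<forall>i<n. c i \<in> C \<and> y i \<in> Y"
    unfolding fspan_def by blast
  have "(\<lambda>s. \<Sum>i<n'. c i * y i s) \<in> Y" if "n' \<le> n" for n'
    using that
  proof (induction n')
    case 0 then show ?case using assms unfolding is_submodule_def by simp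
  next
    case (Suc n')
    then have "(\<lambda>s. c n' * y n' s) \<in> Y" using z(2) assms unfolding is_submodule_def by auto
    with Suc have "(\<lambda>s. (\<Sum>i<n'. c i * y i s) + c n' * y n' s) \<in> Y"
      using assms unfolding is_submodule_def by auto
    then show ?case by simp
  qed
  then show "z \<in> Y" using z by simp
qed

lemma fspan_in_pseries:
  assumes "is_submodule m S Y"
  shows "fspan (ideal_pow m k) Y \<subseteq> pseries m S k Y"
proof
  fix z assume zf: "z \<in> fspan (ideal_pow m k) Y"
  then obtain n :: nat and c y where z: "z = (\<lambda>s. \<Sum>i<n. c i * y i s)" "\<forall>i<n. c i \<in> ideal_pow m k \<and> y i \<in> Y"
    unfolding fspan_def by blast
  have zc: "z \<in> ctensor m S" using fspan_sub[OF assms] zf assms unfolding is_submodule_def by blast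
  define b where "b i = (if i < n then c i else 0)" for i
  define yy where "yy i = (if i < n then y i else (\<lambda>s. 0))" for i
  define kk where "kk i = k + (if i < n then 0 else i)" for i
  have 1: "\<forall>i. yy i \<in> Y" using z(2) assms unfolding yy_def is_submodule_def by auto
  have 2: "\<forall>i. kk i \<ge> k" unfolding kk_def by simp
  have 3: "\<forall>i. b i \<in> ideal_pow m (kk i)"
    using z(2) is_ideal_0[OF ideal_pow_ideal] unfolding b_def kk_def by auto
  have 4: "filterlim kk at_top sequentially"
    unfolding filterlim_at_top eventually_sequentially
  proof
    fix Z show "\<exists>N. \<forall>i\<ge>N. Z \<le> kk i"
      by (rule exI[of _ "max n Z"]) (auto simp: kk_def)
  qed
  have 5: "series_sum m b yy z"
    unfolding series_sum_def
  proof (intro allI exI[of _ n] impI)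
    fix K n' s assume "n \<le> n'"
    then have "(\<Sum>i<n'. b i * yy i s) = (\<Sum>i<n. b i * yy i s)"
      by (intro sum.mono_neutral_right) (auto simp: b_def)
    also have "\<dots> = z s" unfolding z(1) b_def yy_def by simp
    finally show "z s - (\<Sum>i<n'. b i * yy i s) \<in> ideal_pow m K"
      using is_ideal_0[OF ideal_pow_ideal] by simp
  qed
  show "z \<in> pseries m S k Y" unfolding pseries_def
    by (intro CollectI conjI zc exI[of _ b] exI[of _ yy] exI[of _ kk] 1 2 3 4 5)
qed

lemma pseries_sub: "pseries m S k Y \<subseteq> pseriesB m S Y"
  unfolding pseries_def by blast

lemma pseries_in_fspan:
  assumes db: "deformation_base \<iota> m" and sm: "is_submodule m S Y" and pc: "pseudoclosed m S Y"
  shows "pseries m S k Y \<subseteq> fspan (ideal_pow m k) Y"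
proof
  fix z assume "z \<in> pseries m S k Y"
  then obtain b y kk where zc: "z \<in> ctensor m S" and y: "\<forall>i. y i \<in> Y" and kk: "\<forall>i. kk i \<ge> k"
    and b: "\<forall>i. b i \<in> ideal_pow m (kk i)" and kkl: "filterlim kk at_top sequentially"
    and zs: "series_sum m b y z"
    unfolding pseries_def by blast
  have mc: "madic_complete m" and noe: "noetherian_ring TYPE('a)"
    using db unfolding deformation_base_def by auto
  obtain F where F: "finite F" "ideal_pow m k = ideal_gen F"
    using noe ideal_pow_ideal unfolding noetherian_ring_def by blast
  define jj where "jj i = kk i - k" for i
  have "\<forall>i. \<exists>c. (\<forall>f. c f \<in> ideal_pow m (jj i)) \<and> b i = (\<Sum>f\<in>F. f * c f)"
  proof
    fix i
    have "kk i = k + jj i" using kk unfolding jj_def by (metis le_add_diff_inverse)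
    then show "\<exists>c. (\<forall>f. c f \<in> ideal_pow m (jj i)) \<and> b i = (\<Sum>f\<in>F. f * c f)"
      using ideal_pow_split[OF F] b by metis
  qed
  then obtain c where c: "\<And>i f. c i f \<in> ideal_pow m (jj i)" "\<And>i. b i = (\<Sum>f\<in>F. f * c i f)"
    by metis
  have jjl: "filterlim jj at_top sequentially"
    unfolding filterlim_at_top
  proof
    fix Z
    have "eventually (\<lambda>i. kk i \<ge> Z + k) sequentially" using kkl by (simp add: filterlim_at_top)
    then show "eventually (\<lambda>i. jj i \<ge> Z) sequentially"
      by (rule eventually_mono) (simp add: jj_def)
  qed
  have yc: "\<And>i. y i \<in> ctensor m S" using y sm unfolding is_submodule_def by blast
  have "\<forall>f. \<exists>w. w \<in> ctensor m S \<and> series_sum m (\<lambda>i. c i f) y w"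
  proof
    fix f show "\<exists>w. w \<in> ctensor m S \<and> series_sum m (\<lambda>i. c i f) y w"
      by (rule series_exists[OF mc yc, of "\<lambda>i. c i f" jj]) (auto intro: c(1) jjl)
  qed
  then obtain W where W: "\<And>f. W f \<in> ctensor m S" "\<And>f. series_sum m (\<lambda>i. c i f) y (W f)"
    by metis
  have WY: "W f \<in> Y" for f
  proof -
    have "W f \<in> pseriesB m S Y" unfolding pseries_def
      by (intro CollectI conjI W(1) exI[of _ "\<lambda>i. c i f"] exI[of _ y] exI[of _ jj] allI
          c(1) jjl W(2) y[rule_format]) simp
    then show ?thesis using pc unfolding pseudoclosed_def by blast
  qed
  have zW: "z s = (\<Sum>f\<in>F. f * W f s)" for s
  proof -
    have "z s - (\<Sum>f\<in>F. f * W f s) \<in> ideal_pow m K" for K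
    proof -
      have e1: "eventually (\<lambda>n. \<forall>s. z s - (\<Sum>i<n. b i * y i s) \<in> ideal_pow m K) sequentially"
        unfolding eventually_sequentially using zs unfolding series_sum_def by (rule spec)
      have "\<forall>f\<in>F. eventually (\<lambda>n. \<forall>s. W f s - (\<Sum>i<n. c i f * y i s) \<in> ideal_pow m K) sequentially"
      proof (rule ballI)
        fix f
        show "eventually (\<lambda>n. \<forall>s. W f s - (\<Sum>i<n. c i f * y i s) \<in> ideal_pow m K) sequentially"
          unfolding eventually_sequentially using W(2)[of f] unfolding series_sum_def by (rule spec)
      qed
      then have e2: "eventually (\<lambda>n. \<forall>f\<in>F. \<forall>s. W f s - (\<Sum>i<n. c i f * y i s) \<in> ideal_pow m K) sequentially"
        by (rule eventually_ball_finite[OF F(1)])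
      have "\<exists>N. \<forall>n\<ge>N. (\<forall>s. z s - (\<Sum>i<n. b i * y i s) \<in> ideal_pow m K) \<and>
          (\<forall>f\<in>F. \<forall>s. W f s - (\<Sum>i<n. c i f * y i s) \<in> ideal_pow m K)"
        using eventually_conj[OF e1 e2] unfolding eventually_sequentially .
      then obtain N0 where N0: "\<forall>n\<ge>N0. (\<forall>s. z s - (\<Sum>i<n. b i * y i s) \<in> ideal_pow m K) \<and>
          (\<forall>f\<in>F. \<forall>s. W f s - (\<Sum>i<n. c i f * y i s) \<in> ideal_pow m K)" ..
      obtain n where nn: "(\<forall>s. z s - (\<Sum>i<n. b i * y i s) \<in> ideal_pow m K) \<and>
          (\<forall>f\<in>F. \<forall>s. W f s - (\<Sum>i<n. c i f * y i s) \<in> ideal_pow m K)"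
        using N0 by (intro that[of N0]) simp
      have n1: "z s - (\<Sum>i<n. b i * y i s) \<in> ideal_pow m K" using nn by simp
      have n2: "\<forall>f\<in>F. W f s - (\<Sum>i<n. c i f * y i s) \<in> ideal_pow m K" using nn by simp
      have eq: "(\<Sum>i<n. b i * y i s) = (\<Sum>f\<in>F. f * (\<Sum>i<n. c i f * y i s))"
        unfolding c(2) by (simp add: sum_distrib_right sum_distrib_left sum.swap[of _ F] algebra_simps)
      have "(\<Sum>f\<in>F. f * (W f s - (\<Sum>i<n. c i f * y i s))) \<in> ideal_pow m K"
        using n2 by (intro is_ideal_sum[OF ideal_pow_ideal F(1)] is_ideal_mult[OF ideal_pow_ideal]) auto
      with n1 have "(z s - (\<Sum>i<n. b i * y i s)) - (\<Sum>f\<in>F. f * (W f s - (\<Sum>i<n. c i f * y i s))) \<in> ideal_pow m K"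
        using is_ideal_diff[OF ideal_pow_ideal] by blast
      also have "(z s - (\<Sum>i<n. b i * y i s)) - (\<Sum>f\<in>F. f * (W f s - (\<Sum>i<n. c i f * y i s))) =
          z s - (\<Sum>f\<in>F. f * W f s)"
        unfolding eq by (simp add: right_diff_distrib sum_subtractf)
      finally show ?thesis .
    qed
    then have "z s - (\<Sum>f\<in>F. f * W f s) \<in> (\<Inter>K. ideal_pow m K)" by blast
    then show ?thesis using mc unfolding madic_complete_def by simp
  qed
  obtain fs where fs: "set fs = F" "distinct fs" using finite_distinct_list[OF F(1)] by blast
  have "z = (\<lambda>s. \<Sum>i<length fs. fs ! i * W (fs ! i) s)"
  proof
    fix s
    have "(\<Sum>f\<in>F. f * W f s) = sum_list (map (\<lambda>f. f * W f s) fs)"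
      using fs by (simp add: sum_list_distinct_conv_sum_set)
    also have "\<dots> = (\<Sum>i<length fs. fs ! i * W (fs ! i) s)"
      by (simp add: sum_list_sum_nth atLeast0LessThan)
    finally show "z s = (\<Sum>i<length fs. fs ! i * W (fs ! i) s)" using zW by simp
  qed
  moreover have "\<forall>i<length fs. fs ! i \<in> ideal_pow m k \<and> W (fs ! i) \<in> Y"
    using fs F(2) ideal_gen_sub WY by (metis nth_mem subsetD)
  ultimately show "z \<in> fspan (ideal_pow m k) Y" unfolding fspan_def
    by (intro CollectI exI[of _ "length fs"] exI[of _ "\<lambda>i. fs ! i"] exI[of _ "\<lambda>i. W (fs ! i)"] conjI)
qed

theorem lemma2p23:
  fixes \<iota> :: "complex \<Rightarrow> 'b::comm_ring_1" and m :: "'b set"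
    and S :: "'s set" and Y :: "('s \<Rightarrow> 'b) set"
  assumes "deformation_base \<iota> m"
    and "is_submodule m S Y"
    and "pseudoclosed m S Y"
  shows "pseriesB m S Y = fspan UNIV Y \<and>
         (\<forall>k. pseries m S k Y = fspan (ideal_pow m k) Y)"
proof -
  have k: "pseries m S k Y = fspan (ideal_pow m k) Y" for k
    using pseries_in_fspan[OF assms] fspan_in_pseries[OF assms(2)] by blast
  show ?thesis using k[of 0] k by (simp add: ideal_pow_0)
qed

end
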